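(* Let $G$ and $H$ be cyclically orderable graphs with $|V(G)|=|V(H)|$ and $|E(G)|=|E(H)|$. Then for any $u\in V(G)$ and $v\in V(H)$, the series composition $G\oplus H$ obtained by gluing $u$ and $v$ is cyclically orderable.
   Context: A cyclic base ordering (CBO) of a connected graph $G$ is a bijection $\mathcal{O}:E(G)\to\{1,\dots,|E(G)|\}$ such that for every $i\in\{1,\dots,|E(G)|\}$ the edges $\mathcal{O}^{-1}(i),\dots,\mathcal{O}^{-1}(i+|V(G)|-2)$ (indices taken cyclically modulo $|E(G)|$) induce a spanning tree of $G$; $G$ is cyclically orderable if it has a CBO. Given graphs $G$ and $H$ (vertex-disjoint) with $u\in V(G)$ and $v\in V(H)$, the series composition (1-sum) $G\oplus H$ is the graph obtained from the disjoint union of $G$ and $H$ by identifying $u$ and $v$ into a single vertex. *)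

theory Defs
  imports Main
begin

text \<open>A (finite multi)graph is given by a vertex set V, an edge set E and an
incidence map inc assigning to each edge its set of endpoints (one endpoint for
a loop, two otherwise). Parallel edges are allowed since edges are abstract.\<close>

definition graph :: "'v set \<Rightarrow> 'e set \<Rightarrow> ('e \<Rightarrow> 'v set) \<Rightarrow> bool" where
  "graph V E inc \<longleftrightarrow> finite V \<and> finite E \<and>
     (\<forall>e\<in>E. inc e \<subseteq> V \<and> 1 \<le> card (inc e) \<and> card (inc e) \<le> 2)"

definition adj :: "'e set \<Rightarrow> ('e \<Rightarrow> 'v set) \<Rightarrow> ('v \<times> 'v) set" where
  "adj F inc = {(x, y). \<exists>e\<in>F. x \<in> inc e \<and> y \<in> inc e}"

definition connected_on :: "'v set \<Rightarrow> 'e set \<Rightarrow> ('e \<Rightarrow> 'v set) \<Rightarrow> bool" where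
  "connected_on V F inc \<longleftrightarrow> V \<noteq> {} \<and> (\<forall>x\<in>V. \<forall>y\<in>V. (x, y) \<in> (adj F inc)\<^sup>*)"

definition spanning_tree :: "'v set \<Rightarrow> 'e set \<Rightarrow> ('e \<Rightarrow> 'v set) \<Rightarrow> 'e set \<Rightarrow> bool" where
  "spanning_tree V E inc F \<longleftrightarrow> F \<subseteq> E \<and> connected_on V F inc \<and>
     (\<forall>e\<in>F. \<not> connected_on V (F - {e}) inc)"

definition window :: "'e set \<Rightarrow> ('e \<Rightarrow> nat) \<Rightarrow> nat \<Rightarrow> nat \<Rightarrow> 'e set" where
  "window E ord i k = {e\<in>E. \<exists>j<k. ord e = ((i - 1 + j) mod card E) + 1}"

definition CBO :: "'v set \<Rightarrow> 'e set \<Rightarrow> ('e \<Rightarrow> 'v set) \<Rightarrow> ('e \<Rightarrow> nat) \<Rightarrow> bool" where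
  "CBO V E inc ord \<longleftrightarrow> bij_betw ord E {1..card E} \<and>
     (\<forall>i\<in>{1..card E}. spanning_tree V E inc (window E ord i (card V - 1)))"

definition cyclically_orderable :: "'v set \<Rightarrow> 'e set \<Rightarrow> ('e \<Rightarrow> 'v set) \<Rightarrow> bool" where
  "cyclically_orderable V E inc \<longleftrightarrow> connected_on V E inc \<and> (\<exists>ord. CBO V E inc ord)"

text \<open>Series composition (1-sum): disjoint union of G and H with u and v identified
(the identified vertex is represented by Inl u).\<close>
definition glue_vtx :: "'v \<Rightarrow> 'w \<Rightarrow> 'w \<Rightarrow> 'v + 'w" where
  "glue_vtx u v y = (if y = v then Inl u else Inr y)"

definition sc_V :: "'v set \<Rightarrow> 'w set \<Rightarrow> 'v \<Rightarrow> 'w \<Rightarrow> ('v + 'w) set" where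
  "sc_V VG VH u v = Inl ` VG \<union> glue_vtx u v ` VH"

definition sc_E :: "'e set \<Rightarrow> 'f set \<Rightarrow> ('e + 'f) set" where
  "sc_E EG EH = Inl ` EG \<union> Inr ` EH"

definition sc_inc :: "('e \<Rightarrow> 'v set) \<Rightarrow> ('f \<Rightarrow> 'w set) \<Rightarrow> 'v \<Rightarrow> 'w \<Rightarrow> 'e + 'f \<Rightarrow> ('v + 'w) set" where
  "sc_inc incG incH u v x = (case x of Inl e \<Rightarrow> Inl ` incG e | Inr f \<Rightarrow> glue_vtx u v ` incH f)"

end

theory Submission
  imports Defs
begin


lemma mod2: "(m::nat) > 0 \<Longrightarrow> c < 2 \<Longrightarrow> (2*x + c) mod (2*m) = 2*(x mod m) + c"
proof -
  assume "c < 2"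
  have "(2*x + c) mod (2*m) = 2 * ((2*x+c) div 2 mod m) + (2*x+c) mod 2" by (rule mod_mult2_eq)
  also have "(2*x+c) div 2 = x" using \<open>c<2\<close> by presburger
  also have "(2*x+c) mod 2 = c" using \<open>c<2\<close> by presburger
  finally show ?thesis .
qed

lemma win_arith:
  fixes m c p a k :: nat
  assumes m: "m > 0" and c: "c < 2"
  shows "(\<exists>j<2*k. 2*p + c = (a+j) mod (2*m)) \<longleftrightarrow> (\<exists>j'<k. p = ((a+1-c) div 2 + j') mod m)"
proof
  assume "\<exists>j<2*k. 2*p + c = (a+j) mod (2*m)"
  then obtain j where j: "j < 2*k" "2*p + c = (a+j) mod (2*m)" by blast
  define q where "q = (a+j) div 2"
  define t where "t = (a+1-c) div 2"
  have "(a+j) mod 2 = (a+j) mod (2*m) mod 2" by (simp add: mod_mod_cancel)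
  also have "\<dots> = c" using j(2) c by (metis add.commute mod_less mod_mult_self2 numeral_2_eq_2)
  finally have par: "(a+j) mod 2 = c" .
  have aj: "a + j = 2*q + c" using par q_def by presburger
  have "2*p + c = 2*(q mod m) + c" using j(2) aj mod2[OF m c, of q] by simp
  then have pq: "p = q mod m" by simp
  have t1: "2*t \<le> a+1-c" "a+1-c \<le> 2*t+1" unfolding t_def by simp_all
  have tq: "t \<le> q" using t1 aj c by presburger
  have tq2: "q - t < k" using t1 aj c j(1) by linarith
  note tq = tq tq2
  show "\<exists>j'<k. p = ((a+1-c) div 2 + j') mod m"
    by (rule exI[of _ "q - t"]) (use tq pq t_def in auto)
next
  assume "\<exists>j'<k. p = ((a+1-c) div 2 + j') mod m"
  then obtain j' where j': "j' < k" "p = ((a+1-c) div 2 + j') mod m" by blast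
  define t where "t = (a+1-c) div 2"
  define j where "j = 2*t + 2*j' + c - a"
  have t1: "2*t \<le> a+1-c" "a+1-c \<le> 2*t+1" unfolding t_def by simp_all
  have aj1: "a + j = 2*(t+j') + c" using c t1 unfolding j_def by presburger
  have aj2: "j < 2*k" using c j'(1) t1 unfolding j_def by linarith
  note aj = aj1 aj2
  have "(a+j) mod (2*m) = 2*p + c" unfolding aj(1) mod2[OF m c] j'(2) t_def ..
  then show "\<exists>j<2*k. 2*p + c = (a+j) mod (2*m)" using aj(2) by metis
qed



lemma liftG:
  assumes "(x,y) \<in> (adj A incG)\<^sup>*"
  shows "(Inl x, Inl y) \<in> (adj (Inl`A) (sc_inc incG incH u v))\<^sup>*"
  using assms
proof (induction rule: rtrancl_induct)
  case base then show ?case by simp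
next
  case (step y z)
  have "(Inl y, Inl z) \<in> adj (Inl`A) (sc_inc incG incH u v)"
    using step(2) unfolding adj_def sc_inc_def by force
  then show ?case using step(3) by (rule rtrancl_into_rtrancl[rotated])
qed

lemma liftH:
  assumes "(x,y) \<in> (adj B incH)\<^sup>*"
  shows "(glue_vtx u v x, glue_vtx u v y) \<in> (adj (Inr`B) (sc_inc incG incH u v))\<^sup>*"
  using assms
proof (induction rule: rtrancl_induct)
  case base then show ?case by simp
next
  case (step y z)
  have "(glue_vtx u v y, glue_vtx u v z) \<in> adj (Inr`B) (sc_inc incG incH u v)"
    using step(2) unfolding adj_def sc_inc_def by force
  then show ?case using step(3) by (rule rtrancl_into_rtrancl[rotated])
qed

lemma projG:
  assumes "(a,b) \<in> (adj F (sc_inc incG incH u v))\<^sup>*"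
  shows "(case_sum id (\<lambda>_. u) a, case_sum id (\<lambda>_. u) b) \<in> (adj {g. Inl g \<in> F} incG)\<^sup>*"
  using assms
proof (induction rule: rtrancl_induct)
  case base then show ?case by simp
next
  case (step y z)
  from step(2) obtain x where x: "x \<in> F" "y \<in> sc_inc incG incH u v x" "z \<in> sc_inc incG incH u v x"
    unfolding adj_def by auto
  show ?case
  proof (cases x)
    case (Inl g)
    then have "(case_sum id (\<lambda>_. u) y, case_sum id (\<lambda>_. u) z) \<in> adj {g. Inl g \<in> F} incG"
      using x unfolding adj_def sc_inc_def by force
    then show ?thesis using step(3) by (rule rtrancl_into_rtrancl[rotated])
  next
    case (Inr f)
    then have "case_sum id (\<lambda>_. u) y = case_sum id (\<lambda>_. u) z"
      using x unfolding sc_inc_def glue_vtx_def by auto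
    then show ?thesis using step(3) by simp
  qed
qed

lemma projH:
  assumes "(a,b) \<in> (adj F (sc_inc incG incH u v))\<^sup>*"
  shows "(case_sum (\<lambda>_. v) id a, case_sum (\<lambda>_. v) id b) \<in> (adj {g. Inr g \<in> F} incH)\<^sup>*"
  using assms
proof (induction rule: rtrancl_induct)
  case base then show ?case by simp
next
  case (step y z)
  from step(2) obtain x where x: "x \<in> F" "y \<in> sc_inc incG incH u v x" "z \<in> sc_inc incG incH u v x"
    unfolding adj_def by auto
  show ?case
  proof (cases x)
    case (Inr g)
    then have "(case_sum (\<lambda>_. v) id y, case_sum (\<lambda>_. v) id z) \<in> adj {g. Inr g \<in> F} incH"
      using x unfolding adj_def sc_inc_def glue_vtx_def by force
    then show ?thesis using step(3) by (rule rtrancl_into_rtrancl[rotated])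
  next
    case (Inl f)
    then have "case_sum (\<lambda>_. v) id y = case_sum (\<lambda>_. v) id z"
      using x unfolding sc_inc_def by auto
    then show ?thesis using step(3) by simp
  qed
qed

lemma adj_mono: "F \<subseteq> F' \<Longrightarrow> (adj F inc)\<^sup>* \<subseteq> (adj F' inc)\<^sup>*"
  by (rule rtrancl_mono) (auto simp: adj_def)

lemma conn_sum:
  assumes "connected_on VG A incG" "connected_on VH B incH" "u \<in> VG" "v \<in> VH"
  shows "connected_on (sc_V VG VH u v) (Inl`A \<union> Inr`B) (sc_inc incG incH u v)"
proof -
  let ?R = "(adj (Inl`A \<union> Inr`B) (sc_inc incG incH u v))\<^sup>*"
  have mG: "(adj (Inl`A) (sc_inc incG incH u v))\<^sup>* \<subseteq> ?R" by (rule adj_mono) auto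
  have mH: "(adj (Inr`B) (sc_inc incG incH u v))\<^sup>* \<subseteq> ?R" by (rule adj_mono) auto
  have key: "(z, Inl u) \<in> ?R \<and> (Inl u, z) \<in> ?R" if "z \<in> sc_V VG VH u v" for z
  proof -
    from that consider x where "x \<in> VG" "z = Inl x" | y where "y \<in> VH" "z = glue_vtx u v y"
      unfolding sc_V_def by auto
    then show ?thesis
    proof cases
      case 1
      then have "(x,u) \<in> (adj A incG)\<^sup>*" "(u,x) \<in> (adj A incG)\<^sup>*"
        using assms unfolding connected_on_def by auto
      then show ?thesis using 1 liftG[of x u A incG incH u v] liftG[of u x A incG incH u v] mG by blast
    next
      case 2
      then have "(y,v) \<in> (adj B incH)\<^sup>*" "(v,y) \<in> (adj B incH)\<^sup>*"
        using assms unfolding connected_on_def by auto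
      moreover have "glue_vtx u v v = Inl u" by (simp add: glue_vtx_def)
      ultimately show ?thesis using 2 liftH[of _ _ B incH u v incG] mH by force
    qed
  qed
  show ?thesis unfolding connected_on_def
  proof
    show "sc_V VG VH u v \<noteq> {}" using assms unfolding sc_V_def by auto
  next
    show "\<forall>x\<in>sc_V VG VH u v. \<forall>y\<in>sc_V VG VH u v. (x, y) \<in> ?R"
    proof (intro ballI)
      fix x y assume "x \<in> sc_V VG VH u v" "y \<in> sc_V VG VH u v"
      then have "(x, Inl u) \<in> ?R" "(Inl u, y) \<in> ?R" using key by auto
      then show "(x, y) \<in> ?R" by (rule rtrancl_trans)
    qed
  qed
qed

lemma st_sum:
  assumes G: "spanning_tree VG EG incG TG" and H: "spanning_tree VH EH incH TH"
    and uG: "u \<in> VG" and vH: "v \<in> VH"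
  shows "spanning_tree (sc_V VG VH u v) (sc_E EG EH) (sc_inc incG incH u v) (Inl`TG \<union> Inr`TH)"
proof -
  have G1: "TG \<subseteq> EG" and G2: "connected_on VG TG incG" and G3: "\<And>e. e \<in> TG \<Longrightarrow> \<not> connected_on VG (TG - {e}) incG"
    using G unfolding spanning_tree_def by blast+
  have H1: "TH \<subseteq> EH" and H2: "connected_on VH TH incH" and H3: "\<And>e. e \<in> TH \<Longrightarrow> \<not> connected_on VH (TH - {e}) incH"
    using H unfolding spanning_tree_def by blast+
  have s: "Inl ` TG \<union> Inr ` TH \<subseteq> sc_E EG EH" using G1 H1 unfolding sc_E_def by blast
  have c: "connected_on (sc_V VG VH u v) (Inl ` TG \<union> Inr ` TH) (sc_inc incG incH u v)"
    by (rule conn_sum[OF G2 H2 uG vH])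
  have m: "\<not> connected_on (sc_V VG VH u v) (Inl ` TG \<union> Inr ` TH - {e}) (sc_inc incG incH u v)"
    if e: "e \<in> Inl ` TG \<union> Inr ` TH" for e
  proof
    let ?F = "Inl ` TG \<union> Inr ` TH - {e}"
    assume c: "connected_on (sc_V VG VH u v) ?F (sc_inc incG incH u v)"
    then have cc: "\<And>a b. a \<in> sc_V VG VH u v \<Longrightarrow> b \<in> sc_V VG VH u v \<Longrightarrow> (a, b) \<in> (adj ?F (sc_inc incG incH u v))\<^sup>*"
      unfolding connected_on_def by blast
    from e show False
    proof
      assume "e \<in> Inl ` TG"
      then obtain g where g: "g \<in> TG" "e = Inl g" by blast
      have nc: "\<not> connected_on VG (TG - {g}) incG" using G3 g(1) .
      have "VG \<noteq> {}" using uG by blast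
      with nc obtain x y where xy: "x \<in> VG" "y \<in> VG" "(x,y) \<notin> (adj (TG - {g}) incG)\<^sup>*"
        unfolding connected_on_def by blast
      have "Inl x \<in> sc_V VG VH u v" "Inl y \<in> sc_V VG VH u v" using xy(1,2) unfolding sc_V_def by blast+
      then have "(Inl x, Inl y) \<in> (adj ?F (sc_inc incG incH u v))\<^sup>*" by (rule cc)
      from projG[OF this] have "(x,y) \<in> (adj {g'. Inl g' \<in> ?F} incG)\<^sup>*" by simp
      moreover have "{g'. Inl g' \<in> ?F} = TG - {g}" using g by blast
      ultimately show False using xy(3) by simp
    next
      assume "e \<in> Inr ` TH"
      then obtain g where g: "g \<in> TH" "e = Inr g" by blast
      have nc: "\<not> connected_on VH (TH - {g}) incH" using H3 g(1) .
      have "VH \<noteq> {}" using vH by blast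
      with nc obtain x y where xy: "x \<in> VH" "y \<in> VH" "(x,y) \<notin> (adj (TH - {g}) incH)\<^sup>*"
        unfolding connected_on_def by blast
      have "glue_vtx u v x \<in> sc_V VG VH u v" "glue_vtx u v y \<in> sc_V VG VH u v" using xy(1,2) unfolding sc_V_def by blast+
      then have "(glue_vtx u v x, glue_vtx u v y) \<in> (adj ?F (sc_inc incG incH u v))\<^sup>*" by (rule cc)
      from projH[OF this] have "(x,y) \<in> (adj {g'. Inr g' \<in> ?F} incH)\<^sup>*"
        by (cases "x = v"; cases "y = v") (simp_all add: glue_vtx_def)
      moreover have "{g'. Inr g' \<in> ?F} = TH - {g}" using g by blast
      ultimately show False using xy(3) by simp
    qed
  qed
  show ?thesis unfolding spanning_tree_def using s c m by blast
qed



lemma win_shift: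
  assumes "CBO V E inc ord" "card E > 0"
  shows "spanning_tree V E inc {e\<in>E. \<exists>j<card V - 1. ord e = (b+j) mod card E + 1}"
proof -
  let ?i = "b mod card E + 1"
  have i: "?i \<in> {1..card E}" using assms(2) by (simp add: Suc_leI)
  have W: "window E ord ?i (card V - 1) = {e\<in>E. \<exists>j<card V - 1. ord e = (b+j) mod card E + 1}"
    unfolding window_def by (simp add: mod_add_left_eq)
  have A: "\<forall>i\<in>{1..card E}. spanning_tree V E inc (window E ord i (card V - 1))"
    using assms(1) unfolding CBO_def by (rule conjunct2)
  have "spanning_tree V E inc (window E ord ?i (card V - 1))" using A i by (rule bspec)
  then show ?thesis unfolding W .
qed

lemma memG:
  assumes "o' \<in> {1..m}" "(m::nat) > 0"
  shows "(\<exists>j<2*k. 2*o' - 1 = (a+j) mod (2*m) + 1) \<longleftrightarrow> (\<exists>j<k. o' = ((a+1) div 2 + j) mod m + 1)"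
proof -
  have "o' - 1 < m" using assms by auto
  have e1: "(2*o' - 1 = X + 1) \<longleftrightarrow> (2*(o'-1) + 0 = X)" for X using assms(1) by auto
  have e2: "(o' = Y + 1) \<longleftrightarrow> (o' - 1 = Y)" for Y using assms(1) by auto
  show ?thesis unfolding e1 e2 using win_arith[OF assms(2), where c=0 and p="o' - 1" and k=k and a=a] by simp
qed

lemma memH:
  assumes "o' \<in> {1..m}" "(m::nat) > 0"
  shows "(\<exists>j<2*k. 2*o' = (a+j) mod (2*m) + 1) \<longleftrightarrow> (\<exists>j<k. o' = (a div 2 + j) mod m + 1)"
proof -
  have e1: "(2*o' = X + 1) \<longleftrightarrow> (2*(o'-1) + 1 = X)" for X using assms(1) by auto
  have e2: "(o' = Y + 1) \<longleftrightarrow> (o' - 1 = Y)" for Y using assms(1) by auto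
  show ?thesis unfolding e1 e2 using win_arith[OF assms(2), where c=1 and p="o' - 1" and k=k and a=a] by simp
qed



theorem mainTheorem3:
  fixes VG :: "'v set" and EG :: "'e set" and incG :: "'e \<Rightarrow> 'v set"
    and VH :: "'w set" and EH :: "'f set" and incH :: "'f \<Rightarrow> 'w set"
    and u :: 'v and v :: 'w
  assumes "graph VG EG incG" and "graph VH EH incH"
    and "cyclically_orderable VG EG incG" and "cyclically_orderable VH EH incH"
    and "card VG = card VH" and "card EG = card EH"
    and "u \<in> VG" and "v \<in> VH"
  shows "cyclically_orderable (sc_V VG VH u v) (sc_E EG EH) (sc_inc incG incH u v)"
proof -
  define n where "n = card VG"
  define m where "m = card EG"
  have finG: "finite VG" "finite EG" using assms(1) unfolding graph_def by auto
  have finH: "finite VH" "finite EH" using assms(2) unfolding graph_def by auto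
  obtain ordG where oG: "CBO VG EG incG ordG" and cG: "connected_on VG EG incG"
    using assms(3) unfolding cyclically_orderable_def by blast
  obtain ordH where oH: "CBO VH EH incH ordH" and cH: "connected_on VH EH incH"
    using assms(4) unfolding cyclically_orderable_def by blast
  have bG: "bij_betw ordG EG {1..m}" using oG unfolding CBO_def m_def by simp
  have bH: "bij_betw ordH EH {1..m}" using oH assms(6) unfolding CBO_def m_def by simp
  have oGr: "ordG e \<in> {1..m}" if "e \<in> EG" for e using bG that by (rule bij_betw_apply)
  have oHr: "ordH e \<in> {1..m}" if "e \<in> EH" for e using bH that by (rule bij_betw_apply)
  let ?V = "sc_V VG VH u v" and ?E = "sc_E EG EH" and ?inc = "sc_inc incG incH u v"
  have conn: "connected_on ?V ?E ?inc"
    unfolding sc_E_def using conn_sum[OF cG cH assms(7,8)] .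
  have n1: "n \<ge> 1" using finG assms(7) unfolding n_def by (metis card_0_eq empty_iff less_one not_le)
  have Veq: "?V = Inl ` VG \<union> Inr ` (VH - {v})"
    unfolding sc_V_def glue_vtx_def using assms(7,8) by auto
  have cV: "card ?V = 2*n - 1"
  proof -
    have "card ?V = card (Inl ` VG :: ('v+'w) set) + card (Inr ` (VH - {v}) :: ('v+'w) set)"
      unfolding Veq by (rule card_Un_disjoint) (use finG finH in auto)
    also have "\<dots> = n + (n - 1)"
      using assms(5,8) finH by (simp add: card_image n_def)
    finally show ?thesis using n1 by simp
  qed
  have cE: "card ?E = 2*m"
  proof -
    have "card ?E = card (Inl ` EG :: ('e+'f) set) + card (Inr ` EH :: ('e+'f) set)"
      unfolding sc_E_def by (rule card_Un_disjoint) (use finG finH in auto)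
    also have "\<dots> = m + m"
      using assms(6) by (simp add: card_image m_def)
    finally show ?thesis by simp
  qed
  define ord where "ord x = (case x of Inl e \<Rightarrow> 2 * ordG e - 1 | Inr f \<Rightarrow> 2 * ordH f)" for x :: "'e + 'f"
  have inj: "inj_on ord ?E"
  proof
    fix x y assume x: "x \<in> ?E" and y: "y \<in> ?E" and eq: "ord x = ord y"
    show "x = y"
    proof (cases x; cases y)
      fix a b assume ab: "x = Inl a" "y = Inl b"
      then have "a \<in> EG" "b \<in> EG" using x y unfolding sc_E_def by auto
      then have "ordG a = ordG b" using eq ab oGr unfolding ord_def by fastforce
      then show ?thesis using bG ab \<open>a \<in> EG\<close> \<open>b \<in> EG\<close> unfolding bij_betw_def inj_on_def by auto
    next
      fix a b assume ab: "x = Inl a" "y = Inr b"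
      then have "a \<in> EG" "b \<in> EH" using x y unfolding sc_E_def by auto
      then have "ordG a \<ge> 1" using oGr by auto
      moreover have "2*ordG a - 1 = 2*ordH b" using eq ab by (simp add: ord_def)
      ultimately have False by presburger
      then show ?thesis ..
    next
      fix a b assume ab: "x = Inr a" "y = Inl b"
      then have "a \<in> EH" "b \<in> EG" using x y unfolding sc_E_def by auto
      then have "ordG b \<ge> 1" using oGr by auto
      moreover have "2*ordG b - 1 = 2*ordH a" using eq ab by (simp add: ord_def)
      ultimately have False by presburger
      then show ?thesis ..
    next
      fix a b assume ab: "x = Inr a" "y = Inr b"
      then have "a \<in> EH" "b \<in> EH" using x y unfolding sc_E_def by auto
      then have "ordH a = ordH b" using eq ab unfolding ord_def by simp
      then show ?thesis using bH ab \<open>a \<in> EH\<close> \<open>b \<in> EH\<close> unfolding bij_betw_def inj_on_def by auto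
    qed
  qed
  have sub: "ord ` ?E \<subseteq> {1..2*m}"
  proof
    fix z assume "z \<in> ord ` ?E"
    then obtain x where x: "x \<in> ?E" "z = ord x" by blast
    show "z \<in> {1..2*m}"
    proof (cases x)
      case (Inl e)
      then have "e \<in> EG" using x unfolding sc_E_def by auto
      then have "ordG e \<in> {1..m}" by (rule oGr)
      then show ?thesis using x Inl by (simp add: ord_def, arith)
    next
      case (Inr e)
      then have "e \<in> EH" using x unfolding sc_E_def by auto
      then have "ordH e \<in> {1..m}" by (rule oHr)
      then show ?thesis using x Inr by (simp add: ord_def)
    qed
  qed
  have finE: "finite ?E" using finG finH unfolding sc_E_def by auto
  have img: "ord ` ?E = {1..2*m}"
    by (rule card_subset_eq) (use sub inj cE card_image[OF inj] in auto)
  have bij: "bij_betw ord ?E {1..card ?E}" unfolding bij_betw_def cE using inj img by simp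
  have wins: "spanning_tree ?V ?E ?inc (window ?E ord i (card ?V - 1))" if i: "i \<in> {1..card ?E}" for i
  proof -
    have m0: "m > 0" using i cE by auto
    define a where "a = i - 1"
    define WG where "WG = {e\<in>EG. \<exists>j<card VG - 1. ordG e = ((a+1) div 2 + j) mod card EG + 1}"
    define WH where "WH = {e\<in>EH. \<exists>j<card VH - 1. ordH e = (a div 2 + j) mod card EH + 1}"
    have k: "card ?V - 1 = 2 * (n - 1)" using cV n1 by simp
    have wsub: "window ?E ord i (card ?V - 1) \<subseteq> ?E" by (auto simp: window_def)
    have weq: "window ?E ord i (card ?V - 1) = Inl ` WG \<union> Inr ` WH"
    proof (rule set_eqI)
      fix x
      show "x \<in> window ?E ord i (card ?V - 1) \<longleftrightarrow> x \<in> Inl ` WG \<union> Inr ` WH"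
      proof (cases x)
        case (Inl e)
        show ?thesis
        proof (cases "e \<in> EG")
          case True
          have "x \<in> window ?E ord i (card ?V - 1) \<longleftrightarrow>
               (\<exists>j<2*(n-1). 2 * ordG e - 1 = (a+j) mod (2*m) + 1)"
            unfolding window_def k cE a_def using Inl True by (simp add: ord_def sc_E_def)
          also have "\<dots> \<longleftrightarrow> (\<exists>j<n-1. ordG e = ((a+1) div 2 + j) mod m + 1)"
            by (rule memG[OF oGr[OF True] m0])
          also have "\<dots> \<longleftrightarrow> x \<in> Inl ` WG"
            unfolding WG_def using Inl True by (auto simp: n_def m_def)
          finally show ?thesis using Inl by auto
        next
          case False
          have "x \<notin> ?E" using Inl False by (auto simp: sc_E_def)
          moreover have "x \<notin> Inl ` WG \<union> Inr ` WH" using Inl False by (auto simp: WG_def)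
          ultimately show ?thesis using wsub by blast
        qed
      next
        case (Inr e)
        show ?thesis
        proof (cases "e \<in> EH")
          case True
          have "x \<in> window ?E ord i (card ?V - 1) \<longleftrightarrow>
               (\<exists>j<2*(n-1). 2 * ordH e = (a+j) mod (2*m) + 1)"
            unfolding window_def k cE a_def using Inr True by (simp add: ord_def sc_E_def)
          also have "\<dots> \<longleftrightarrow> (\<exists>j<n-1. ordH e = (a div 2 + j) mod m + 1)"
            by (rule memH[OF oHr[OF True] m0])
          also have "\<dots> \<longleftrightarrow> x \<in> Inr ` WH"
            unfolding WH_def using Inr True assms(5,6) by (auto simp: n_def m_def)
          finally show ?thesis using Inr by auto
        next
          case False
          have "x \<notin> ?E" using Inr False by (auto simp: sc_E_def)
          moreover have "x \<notin> Inl ` WG \<union> Inr ` WH" using Inr False by (auto simp: WH_def)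
          ultimately show ?thesis using wsub by blast
        qed
      qed
    qed
    have sG: "spanning_tree VG EG incG WG" unfolding WG_def
      by (rule win_shift[OF oG]) (use m0 m_def in simp)
    have sH: "spanning_tree VH EH incH WH" unfolding WH_def
      by (rule win_shift[OF oH]) (use m0 m_def assms(6) in simp)
    show ?thesis unfolding weq by (rule st_sum[OF sG sH assms(7,8)])
  qed
  have "CBO ?V ?E ?inc ord" unfolding CBO_def using bij wins by blast
  then show ?thesis unfolding cyclically_orderable_def using conn by blast
qed

end
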